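(* Let $S$ and $Y$ be binary and fix constants $c_1,c_2\in[0,1]$. Fix the observed conditional distributions $P(Y=y,S=s\mid T=t)$, $y,s,t\in\{0,1\}$, and write $P_{ys|t}=P(Y=y,S=s\mid T=t)$. Consider all joint distributions of $(S_0,S_1,Y_{00},Y_{01},Y_{10},Y_{11})$ on $\{0,1\}^6$ that are compatible with the observed distributions and satisfy $\mathrm{HR}(T\to S)\le c_1$ and $\mathrm{HR}(S\to Y\mid T=t)\le c_2$ for $t=0,1$, and assume this set is nonempty. Define $$L=\max\{L_1,L_2,L_3,L_4\},\quad L_1=0,\ L_2=P_{11|0}-P_{11|1}-c_1,\ L_3=P(Y=0\mid T=1)-P(Y=0\mid T=0),\ L_4=P_{00|1}-P_{00|0}-c_1,$$ $$U=\min\{U_1,U_2,U_3,U_4\},\quad U_1=P(Y=1\mid T=0),\ U_2=c_1+P_{10|0}+P_{01|1},\ U_3=P(Y=0\mid T=1),\ U_4=1+c_1-P_{01|0}-P_{10|1}.$$ Then every such joint distribution satisfies $L\le \mathrm{HR}(T\to Y)\le U$. Moreover the bounds are sharp: both $L$ and $U$ are attained by joint distributions in this set. In particular, the sharp bounds do not depend on $c_2$.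
   Context: Binary treatment $T\in\{0,1\}$. For $t\in\{0,1\}$, $S_t$ is the potential surrogate under treatment $t$, and for $t$ and surrogate level $s$, $Y_{ts}$ is the potential primary outcome when $T$ is set to $t$ and $S$ to $s$; write $Y_{T=t}=Y_{tS_t}$. The treatment is randomized: $T$ is independent of $(S_0,S_1,(Y_{ts})_{t,s})$, so the observed data determine $P(Y=y,S=s\mid T=t)=P(Y_{tS_t}=y,S_t=s)$. A joint distribution of the potential outcomes is "compatible" with given observed distributions if it induces, for each $t$, the given law of $(Y_{tS_t},S_t)$. Harm rates: $\mathrm{HR}(T\to S)=P(S_0>S_1)$ (for binary $S$: $P(S_0=1,S_1=0)$); $\mathrm{HR}(T\to Y)=P(Y_{0S_0}>Y_{1S_1})$ (for binary $Y$: $P(Y_{0S_0}=1,Y_{1S_1}=0)$); for binary $S,Y$, $\mathrm{HR}(S\to Y\mid T=t)=P(Y_{t0}=1,Y_{t1}=0)$. *)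

theory Defs
  imports Complex_Main
begin

text \<open>Binary variables are encoded as bool (True = 1, False = 0).
  A point of the potential-outcome space {0,1}^6 is a tuple
  (S0, S1, Y00, Y01, Y10, Y11).\<close>

type_synonym outcome = "bool \<times> bool \<times> bool \<times> bool \<times> bool \<times> bool"

definition S_pot :: "bool \<Rightarrow> outcome \<Rightarrow> bool" where
  "S_pot t w = (case w of (s0, s1, _, _, _, _) \<Rightarrow> if t then s1 else s0)"

definition Y_pot :: "bool \<Rightarrow> bool \<Rightarrow> outcome \<Rightarrow> bool" where
  "Y_pot t s w = (case w of (_, _, y00, y01, y10, y11) \<Rightarrow>
     if t then (if s then y11 else y10) else (if s then y01 else y00))"

definition Y_T :: "bool \<Rightarrow> outcome \<Rightarrow> bool" where
  "Y_T t w = Y_pot t (S_pot t w) w"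

definition is_pmf :: "(outcome \<Rightarrow> real) \<Rightarrow> bool" where
  "is_pmf p \<longleftrightarrow> (\<forall>w. 0 \<le> p w) \<and> (\<Sum>w\<in>UNIV. p w) = 1"

definition Pr :: "(outcome \<Rightarrow> real) \<Rightarrow> (outcome \<Rightarrow> bool) \<Rightarrow> real" where
  "Pr p E = (\<Sum>w\<in>{w. E w}. p w)"

text \<open>Observed data: Pobs y s t = P(Y=y, S=s | T=t).  Compatibility:
  for each t, the law of (Y_{t S_t}, S_t) equals the observed law.\<close>
definition compatible :: "(bool \<Rightarrow> bool \<Rightarrow> bool \<Rightarrow> real) \<Rightarrow> (outcome \<Rightarrow> real) \<Rightarrow> bool" where
  "compatible Pobs p \<longleftrightarrow> is_pmf p \<and>
     (\<forall>t y s. Pr p (\<lambda>w. Y_T t w = y \<and> S_pot t w = s) = Pobs y s t)"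

definition HR_TS :: "(outcome \<Rightarrow> real) \<Rightarrow> real" where
  "HR_TS p = Pr p (\<lambda>w. S_pot False w \<and> \<not> S_pot True w)"

definition HR_SY :: "(outcome \<Rightarrow> real) \<Rightarrow> bool \<Rightarrow> real" where
  "HR_SY p t = Pr p (\<lambda>w. Y_pot t False w \<and> \<not> Y_pot t True w)"

definition HR_TY :: "(outcome \<Rightarrow> real) \<Rightarrow> real" where
  "HR_TY p = Pr p (\<lambda>w. Y_T False w \<and> \<not> Y_T True w)"

definition admissible ::
  "(bool \<Rightarrow> bool \<Rightarrow> bool \<Rightarrow> real) \<Rightarrow> real \<Rightarrow> real \<Rightarrow> (outcome \<Rightarrow> real) set" where
  "admissible Pobs c1 c2 = {p. compatible Pobs p \<and> HR_TS p \<le> c1 \<and>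
      (\<forall>t. HR_SY p t \<le> c2)}"

definition PY :: "(bool \<Rightarrow> bool \<Rightarrow> bool \<Rightarrow> real) \<Rightarrow> bool \<Rightarrow> bool \<Rightarrow> real" where
  "PY Pobs y t = Pobs y False t + Pobs y True t"

definition lowerL :: "(bool \<Rightarrow> bool \<Rightarrow> bool \<Rightarrow> real) \<Rightarrow> real \<Rightarrow> real" where
  "lowerL Pobs c1 = Max {0,
      Pobs True True False - Pobs True True True - c1,
      PY Pobs False True - PY Pobs False False,
      Pobs False False True - Pobs False False False - c1}"

definition upperU :: "(bool \<Rightarrow> bool \<Rightarrow> bool \<Rightarrow> real) \<Rightarrow> real \<Rightarrow> real" where
  "upperU Pobs c1 = Min {PY Pobs True False,
      c1 + Pobs True False False + Pobs False True True,
      PY Pobs False True,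
      1 + c1 - Pobs False True False - Pobs True False True}"

end

theory Submission
  imports Defs
begin

lemma sum_outcome: "(\<Sum>w\<in>(UNIV::outcome set). f w) = (\<Sum>a\<in>UNIV. \<Sum>b\<in>UNIV. \<Sum>c\<in>UNIV. \<Sum>d\<in>UNIV. \<Sum>e\<in>UNIV. \<Sum>g\<in>UNIV. f (a,b,c,d,e,g))"
  by (simp add: UNIV_Times_UNIV[symmetric] sum.cartesian_product del: UNIV_Times_UNIV)
lemma Pr_alt: "Pr p E = (\<Sum>w\<in>UNIV. if E w then p w else 0)"
  unfolding Pr_def by (simp add: sum.If_cases)
lemmas expand = Pr_alt sum_outcome UNIV_bool Y_T_def Y_pot_def S_pot_def

lemma lift:
  fixes Qc :: "bool \<Rightarrow> bool \<Rightarrow> bool \<Rightarrow> bool \<Rightarrow> real" and f :: "bool \<Rightarrow> bool"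
  assumes f: "f = id \<or> f = Not"
    and q1: "\<forall>y0 s0 y1 s1. 0 \<le> Qc y0 s0 y1 s1"
    and qA: "\<forall>y s. Qc y s True True + Qc y s True False + Qc y s False True + Qc y s False False = Pobs y s False"
    and qB: "\<forall>y s. Qc True True (f y) s + Qc True False (f y) s + Qc False True (f y) s + Qc False False (f y) s = Pobs y s True"
    and sA: "Pobs True True False + Pobs True False False + Pobs False True False + Pobs False False False = 1"
    and qc: "Qc True True True False + Qc True True False False + Qc False True True False + Qc False True False False \<le> c1"
    and c2: "0 \<le> c2"
    and pdef: "p = (\<lambda>w. case w of (s0,s1,y00,y01,y10,y11) \<Rightarrow> if y00=y01 \<and> y10=y11 then Qc y00 s0 (f y10) s1 else 0)"
  shows "p \<in> admissible Pobs c1 c2"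
    "HR_TY p = Qc True True (f False) True + Qc True True (f False) False + Qc True False (f False) True + Qc True False (f False) False"
proof -
  let ?H = "Qc True True (f False) True + Qc True True (f False) False + Qc True False (f False) True + Qc True False (f False) False"
  have "p \<in> admissible Pobs c1 c2 \<and> HR_TY p = ?H" using f
  proof (elim disjE)
    assume ff: "f = id"
    note A = qA[simplified all_bool_eq] and B = qB[simplified all_bool_eq ff, simplified]
    note N = q1[simplified all_bool_eq]
    have 1: "p \<in> admissible Pobs c1 c2"
      unfolding admissible_def compatible_def is_pmf_def HR_TS_def HR_SY_def pdef ff
      using A B N sA qc c2 by (simp add: expand all_bool_eq)
    have 2: "HR_TY p = ?H"
      unfolding HR_TY_def pdef ff by (simp add: expand)
    show ?thesis using 1 2 by simp
  next
    assume ff: "f = Not"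
    note A = qA[simplified all_bool_eq] and B = qB[simplified all_bool_eq ff, simplified]
    note N = q1[simplified all_bool_eq]
    have 1: "p \<in> admissible Pobs c1 c2"
      unfolding admissible_def compatible_def is_pmf_def HR_TS_def HR_SY_def pdef ff
      using A B N sA qc c2 by (simp add: expand all_bool_eq)
    have 2: "HR_TY p = ?H"
      unfolding HR_TY_def pdef ff by (simp add: expand)
    show ?thesis using 1 2 by simp
  qed
  then show "p \<in> admissible Pobs c1 c2" "HR_TY p = ?H" by simp_all
qed

lemma bounds:
  assumes "p \<in> admissible Pobs c1 c2"
  shows "lowerL Pobs c1 \<le> HR_TY p \<and> HR_TY p \<le> upperU Pobs c1"
proof -
  have pm: "is_pmf p" and cp: "\<forall>t y s. Pr p (\<lambda>w. Y_T t w = y \<and> S_pot t w = s) = Pobs y s t"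
    and hts: "HR_TS p \<le> c1"
    using assms by (auto simp: admissible_def compatible_def)
  have nn: "\<forall>a b c d e g. 0 \<le> p (a,b,c,d,e,g)" using pm by (simp add: is_pmf_def)
  have s1: "(\<Sum>w\<in>UNIV. p w) = 1" using pm by (simp add: is_pmf_def)
  note nn' = nn[simplified all_bool_eq]
  note cp' = cp[simplified all_bool_eq expand, simplified]
  note s1' = s1[simplified expand, simplified]
  note hts' = hts[unfolded HR_TS_def, simplified expand, simplified]
  show ?thesis
    unfolding lowerL_def upperU_def PY_def HR_TY_def
    apply (simp add: expand)
    using nn' cp' s1' hts' apply (elim conjE)
    apply (intro conjI)
    apply linarith+
    done
qed

lemma path_flow:
  fixes m11 m10 m00 r Q a11 b00 w11 w10 w00 t U :: real
  assumes "w11 = min m11 (min r a11)" "w00 = min m00 (min Q b00)"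
    "w10 = min m10 (min (a11 - w11) (b00 - w00))"
    and h: "U \<le> t+(m11+m10+m00)" "U \<le> t+(m11+m10+Q)" "U \<le> t+(m11+m10+b00)" "U \<le> t+(r+m10+m00)" "U \<le> t+(r+m10+Q)" "U \<le> t+(r+m10+b00)" "U \<le> t+(a11+m10+m00)" "U \<le> t+(a11+m10+Q)" "U \<le> t+(a11+m10+b00)" "U \<le> t+(a11+m00)" "U \<le> t+(a11+Q)" "U \<le> t+(a11+b00)" "U \<le> t+(m11+b00)" "U \<le> t+(r+b00)" "U \<le> t+(a11+b00)"
  shows "U \<le> t + (w11+w10+w00)"
proof -
  have "w11 = m11 \<or> w11 = r \<or> w11 = a11" "w00 = m00 \<or> w00 = Q \<or> w00 = b00"
     "w10 = m10 \<or> w10 = a11 - w11 \<or> w10 = b00 - w00"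
    using assms(1-3) by (auto simp: min_def)
  then show ?thesis using h by (elim disjE; linarith)
qed

lemma flow_core:
  fixes a11 a10 a01 a00 b11 b10 b01 b00 c U k m11 m10 m01 m00 w11 w10 w01 w00 :: real
  assumes nn: "0 \<le> a11" "0 \<le> a10" "0 \<le> a01" "0 \<le> a00" "0 \<le> b11" "0 \<le> b10" "0 \<le> b01" "0 \<le> b00"
    and sa: "a11 + a10 + a01 + a00 = 1" and sb: "b11 + b10 + b01 + b00 = 1"
    and c0: "0 \<le> c" and feas: "a11 + a01 - b11 - b01 \<le> c"
    and U_def: "U = min (min (a11+a10) (c+a10+b01)) (min (b01+b00) (1+c-a01-b10))"
    and k_def: "k = min (min c (a11+a01)) (min (b10+b00) (min (a11+b01+b10+b00-U) (a11+a10+a01+b00-U)))"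
    and m11: "m11 = a11+a01-k" and m10: "m10 = k" and m01: "m01 = b11+b01-a11-a01+k" and m00: "m00 = 1-b11-b01-k"
    and w01: "w01 = max 0 (min (min m01 a10) (min b01 (a10+b01+m10-U)))"
    and w11: "w11 = min m11 (min (b01-w01) a11)"
    and w00: "w00 = min m00 (min (a10-w01) b00)"
    and w10: "w10 = min m10 (min (a11-w11) (b00-w00))"
  shows "0 \<le> k" "k \<le> c" "0 \<le> m11" "0 \<le> m01" "0 \<le> m00"
    "0 \<le> w11" "0 \<le> w10" "0 \<le> w01" "0 \<le> w00"
    "w11 \<le> m11" "w10 \<le> m10" "w01 \<le> m01" "w00 \<le> m00"
    "w11 + w10 \<le> a11" "w01 + w00 \<le> a10" "w11 + w01 \<le> b01" "w10 + w00 \<le> b00"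
    "U \<le> w11 + w10 + w01 + w00"
proof -
  have U: "U \<le> a11+a10" "U \<le> c+a10+b01" "U \<le> b01+b00" "U \<le> 1+c-a01-b10"
    unfolding U_def by auto
  have kub: "k \<le> c" "k \<le> a11+a01" "k \<le> b10+b00" "k \<le> a11+b01+b10+b00-U" "k \<le> a11+a10+a01+b00-U"
    unfolding k_def by auto
  have klb: "0 \<le> k" "a11 + a01 - b11 - b01 \<le> k" "U - a10 - b01 \<le> k" "U - 1 + b10 + a01 \<le> k"
    unfolding k_def min.bounded_iff using U nn sa sb c0 feas by (intro conjI; linarith)+
  show "0 \<le> k" "k \<le> c" using kub klb by auto
  show "0 \<le> m11" "0 \<le> m01" "0 \<le> m00" using kub klb m11 m01 m00 sb by linarith+
  show "0 \<le> w01" using w01 by simp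
  show g: "w11 \<le> m11" "w10 \<le> m10" "w01 \<le> m01" "w00 \<le> m00"
    "w11 + w10 \<le> a11" "w01 + w00 \<le> a10" "w11 + w01 \<le> b01" "w10 + w00 \<le> b00"
    "0 \<le> w11" "0 \<le> w10" "0 \<le> w00"
  proof -
    have a: "0 \<le> w01" "w01 \<le> m01" "w01 \<le> a10" "w01 \<le> b01" using w01 \<open>0 \<le> m01\<close> nn by auto
    have b: "0 \<le> w11" "w11 \<le> m11" "w11 \<le> b01 - w01" "w11 \<le> a11" using w11 a \<open>0 \<le> m11\<close> nn by auto
    have d: "0 \<le> w00" "w00 \<le> m00" "w00 \<le> a10 - w01" "w00 \<le> b00" using w00 a \<open>0 \<le> m00\<close> nn by auto
    have e: "0 \<le> w10" "w10 \<le> m10" "w10 \<le> a11 - w11" "w10 \<le> b00 - w00" using w10 b d klb m10 nn by auto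
    show "w11 \<le> m11" "w10 \<le> m10" "w01 \<le> m01" "w00 \<le> m00"
    "w11 + w10 \<le> a11" "w01 + w00 \<le> a10" "w11 + w01 \<le> b01" "w10 + w00 \<le> b00"
    "0 \<le> w11" "0 \<le> w10" "0 \<le> w00" using a b d e by linarith+
  qed
  have cuts: "U \<le> a11+a10" "U \<le> b01+b00" "U \<le> a10+b01+m10" "U \<le> a11+b00+m01"
    "U \<le> a11+b01+m00" "U \<le> a10+b00+m11" "U \<le> b01+m10+m00" "U \<le> b00+m11+m01"
    "U \<le> a11+m01+m00" "U \<le> a10+m11+m10" "U \<le> m11+m10+m01+m00"
    using U kub klb m11 m10 m01 m00 nn sa sb by linarith+
  have t1: "w01 \<le> a10+b01+m10-U" using w01 cuts(3) by auto
  have t2: "w01 = m01 \<or> w01 = a10 \<or> w01 = b01 \<or> a10+b01+m10-U \<le> w01" using w01 cuts(3) \<open>0 \<le> m01\<close> nn by (auto simp: min_def max_def)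
  have t3: "0 \<le> w01" "w01 \<le> m01" "w01 \<le> a10" "w01 \<le> b01" using w01 \<open>0 \<le> m01\<close> nn by auto
  have al: "U \<le> w01 + (m11+m10+m00)" "U \<le> w01 + (m11+b00)" "U \<le> w01 + (a11+m00)" "U \<le> w01 + (a11+b00)"
    using t2 t1 cuts nn \<open>0 \<le> m11\<close> \<open>0 \<le> m00\<close> klb m10 by (elim disjE; linarith)+
  have hh: "U \<le> w01+(m11+m10+m00)" "U \<le> w01+(m11+m10+(a10-w01))" "U \<le> w01+(m11+m10+b00)" "U \<le> w01+((b01-w01)+m10+m00)" "U \<le> w01+((b01-w01)+m10+(a10-w01))" "U \<le> w01+((b01-w01)+m10+b00)" "U \<le> w01+(a11+m10+m00)" "U \<le> w01+(a11+m10+(a10-w01))" "U \<le> w01+(a11+m10+b00)" "U \<le> w01+(a11+m00)" "U \<le> w01+(a11+(a10-w01))" "U \<le> w01+(a11+b00)" "U \<le> w01+(m11+b00)" "U \<le> w01+((b01-w01)+b00)" "U \<le> w01+(a11+b00)"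
    using al t1 t3 cuts nn \<open>0 \<le> m11\<close> \<open>0 \<le> m00\<close> klb m10 by linarith+
  have "U \<le> w01 + (w11+w10+w00)"
    by (rule path_flow[OF w11 w00 w10 hh])
  then show "U \<le> w11 + w10 + w01 + w00" by simp
qed

definition cell :: "real \<Rightarrow> real \<Rightarrow> real \<Rightarrow> real \<Rightarrow> bool \<Rightarrow> bool \<Rightarrow> real" where
  "cell f11 f10 f01 f00 s0 s1 = (if s0 then (if s1 then f11 else f10) else (if s1 then f01 else f00))"

lemma coupling_exists:
  fixes A B :: "bool \<Rightarrow> bool \<Rightarrow> real" and c :: real
  assumes An: "\<forall>y s. 0 \<le> A y s" and Bn: "\<forall>y s. 0 \<le> B y s"
    and As: "A True True + A True False + A False True + A False False = 1"
    and Bs: "B True True + B True False + B False True + B False False = 1"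
    and c0: "0 \<le> c" and feas: "A True True + A False True - B True True - B False True \<le> c"
  shows "\<exists>Qc. (\<forall>y0 s0 y1 s1. 0 \<le> Qc y0 s0 y1 s1)
    \<and> (\<forall>y s. Qc y s True True + Qc y s True False + Qc y s False True + Qc y s False False = A y s)
    \<and> (\<forall>y s. Qc True True y s + Qc True False y s + Qc False True y s + Qc False False y s = B y s)
    \<and> Qc True True True False + Qc True True False False + Qc False True True False + Qc False True False False \<le> c
    \<and> min (min (A True True + A True False) (c + A True False + B False True))
          (min (B False True + B False False) (1 + c - A False True - B True False))
       \<le> Qc True True False True + Qc True True False False + Qc True False False True + Qc True False False False"
proof -
  define a11 where "a11 = A True True"
  define a10 where "a10 = A True False"
  define a01 where "a01 = A False True"
  define a00 where "a00 = A False False"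
  define b11 where "b11 = B True True"
  define b10 where "b10 = B True False"
  define b01 where "b01 = B False True"
  define b00 where "b00 = B False False"
  define U where "U = min (min (a11+a10) (c+a10+b01)) (min (b01+b00) (1+c-a01-b10))"
  define k where "k = min (min c (a11+a01)) (min (b10+b00) (min (a11+b01+b10+b00-U) (a11+a10+a01+b00-U)))"
  define m11 where "m11 = a11+a01-k"
  define m10 where "m10 = k"
  define m01 where "m01 = b11+b01-a11-a01+k"
  define m00 where "m00 = 1-b11-b01-k"
  define w01 where "w01 = max 0 (min (min m01 a10) (min b01 (a10+b01+m10-U)))"
  define w11 where "w11 = min m11 (min (b01-w01) a11)"
  define w00 where "w00 = min m00 (min (a10-w01) b00)"
  define w10 where "w10 = min m10 (min (a11-w11) (b00-w00))"
  have nn: "0 \<le> a11" "0 \<le> a10" "0 \<le> a01" "0 \<le> a00" "0 \<le> b11" "0 \<le> b10" "0 \<le> b01" "0 \<le> b00"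
    using An Bn by (auto simp: a11_def a10_def a01_def a00_def b11_def b10_def b01_def b00_def)
  have sa: "a11 + a10 + a01 + a00 = 1" and sb: "b11 + b10 + b01 + b00 = 1"
    using As Bs by (auto simp: a11_def a10_def a01_def a00_def b11_def b10_def b01_def b00_def)
  have fe: "a11 + a01 - b11 - b01 \<le> c" using feas by (simp add: a11_def a01_def b11_def b01_def)
  note F = flow_core[OF nn sa sb c0 fe U_def k_def m11_def m10_def m01_def m00_def w01_def w11_def w00_def w10_def]
  define x10 where "x10 = max w10 (a11-m11)"
  define x11 where "x11 = a11 - x10"
  define x01 where "x01 = max w01 (a10-m00)"
  define x00 where "x00 = a10 - x01"
  define z11 where "z11 = max w11 (b01-m01)"
  define z01 where "z01 = b01 - z11"
  define z10 where "z10 = max w10 (b00-m00)"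
  define z00 where "z00 = b00 - z10"
  have mx: "\<And>a b::real. max a b = a \<or> max a b = b" by (auto simp: max_def)
  have xz0: "w10 \<le> x10" "a11-m11 \<le> x10" "w01 \<le> x01" "a10-m00 \<le> x01"
    "w11 \<le> z11" "b01-m01 \<le> z11" "w10 \<le> z10" "b00-m00 \<le> z10"
    unfolding x10_def x01_def z11_def z10_def by simp_all
  have xz1: "x10 = w10 \<or> x10 = a11-m11" "x01 = w01 \<or> x01 = a10-m00"
    "z11 = w11 \<or> z11 = b01-m01" "z10 = w10 \<or> z10 = b00-m00"
    unfolding x10_def x01_def z11_def z10_def by (rule mx)+
  have Fw: "w11 \<le> m11" "w10 \<le> m10" "w01 \<le> m01" "w00 \<le> m00"
    "w11 + w10 \<le> a11" "w01 + w00 \<le> a10" "w11 + w01 \<le> b01" "w10 + w00 \<le> b00" using F by simp_all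
  have xz: "w10 \<le> x10" "x10 \<le> m10" "w11 \<le> x11" "x11 \<le> m11" "w01 \<le> x01" "x01 \<le> m01" "w00 \<le> x00" "x00 \<le> m00"
     "w11 \<le> z11" "z11 \<le> m11" "w01 \<le> z01" "z01 \<le> m01" "w10 \<le> z10" "z10 \<le> m10" "w00 \<le> z00" "z00 \<le> m00"
  proof -
    show "w10 \<le> x10" "w01 \<le> x01" "w11 \<le> z11" "w10 \<le> z10" using xz0 by simp_all
    show "x10 \<le> m10" using xz1(1) Fw(2) m11_def m10_def nn(3) by auto
    show "w11 \<le> x11" using xz1(1) Fw(5,1) x11_def by auto
    show "x11 \<le> m11" using xz0(2) x11_def by auto
    show "x01 \<le> m01" using xz1(2) Fw(3) m01_def m00_def nn sa sb by auto
    show "w00 \<le> x00" using xz1(2) Fw(6,4) x00_def by auto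
    show "x00 \<le> m00" using xz0(4) x00_def by auto
    show "z11 \<le> m11" using xz1(3) Fw(1) m11_def m01_def nn sb by auto
    show "w01 \<le> z01" using xz1(3) Fw(7,3) z01_def by auto
    show "z01 \<le> m01" using xz0(6) z01_def by auto
    show "z10 \<le> m10" using xz1(4) Fw(2) m10_def m00_def nn sb by auto
    show "w00 \<le> z00" using xz1(4) Fw(8,4) z00_def by auto
    show "z00 \<le> m00" using xz0(8) z00_def by auto
  qed
  define t11 where "t11 = max w11 (x11+z11-m11)"
  define t10 where "t10 = max w10 (x10+z10-m10)"
  define t01 where "t01 = max w01 (x01+z01-m01)"
  define t00 where "t00 = max w00 (x00+z00-m00)"
  have tf: "w11 \<le> t11" "t11 \<le> x11" "t11 \<le> z11" "x11+z11-m11 \<le> t11"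
    "w10 \<le> t10" "t10 \<le> x10" "t10 \<le> z10" "x10+z10-m10 \<le> t10"
    "w01 \<le> t01" "t01 \<le> x01" "t01 \<le> z01" "x01+z01-m01 \<le> t01"
    "w00 \<le> t00" "t00 \<le> x00" "t00 \<le> z00" "x00+z00-m00 \<le> t00"
    unfolding t11_def t10_def t01_def t00_def max.bounded_iff
    using xz by auto
  define M where "M = cell m11 m10 m01 m00"
  define X where "X = cell x11 x10 x01 x00"
  define Z where "Z = cell z11 z10 z01 z00"
  define T where "T = cell t11 t10 t01 t00"
  define Qc where "Qc = (\<lambda>y0 s0 y1 s1. if y0 then (if y1 then X s0 s1 - T s0 s1 else T s0 s1)
      else (if y1 then M s0 s1 - X s0 s1 - Z s0 s1 + T s0 s1 else Z s0 s1 - T s0 s1))"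
  have q1: "\<forall>y0 s0 y1 s1. 0 \<le> Qc y0 s0 y1 s1"
    unfolding Qc_def M_def X_def Z_def T_def cell_def using tf F by (simp add: all_bool_eq)
  have q2: "\<forall>y s. Qc y s True True + Qc y s True False + Qc y s False True + Qc y s False False = A y s"
    unfolding Qc_def M_def X_def Z_def T_def cell_def all_bool_eq
    using m11_def m10_def m01_def m00_def x11_def x00_def a11_def a10_def a01_def a00_def sa
    by simp
  have q3: "\<forall>y s. Qc True True y s + Qc True False y s + Qc False True y s + Qc False False y s = B y s"
    unfolding Qc_def M_def X_def Z_def T_def cell_def all_bool_eq
    using m11_def m10_def m01_def m00_def z01_def z00_def b11_def b10_def b01_def b00_def sb
    by simp
  have q4: "Qc True True True False + Qc True True False False + Qc False True True False + Qc False True False False \<le> c"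
    unfolding Qc_def M_def X_def Z_def T_def cell_def using F m10_def by simp
  have q5: "U \<le> Qc True True False True + Qc True True False False + Qc True False False True + Qc True False False False"
    unfolding Qc_def M_def X_def Z_def T_def cell_def using F tf by simp
  show ?thesis
    apply (rule exI[of _ Qc])
    using q1 q2 q3 q4 q5 by (simp add: U_def a11_def a10_def a01_def a00_def b11_def b10_def b01_def b00_def)
qed



theorem proposition1:
  fixes Pobs :: "bool \<Rightarrow> bool \<Rightarrow> bool \<Rightarrow> real" and c1 c2 :: real
  assumes "0 \<le> c1" "c1 \<le> 1" "0 \<le> c2" "c2 \<le> 1"
    and "admissible Pobs c1 c2 \<noteq> {}"
  shows "(\<forall>p\<in>admissible Pobs c1 c2.
            lowerL Pobs c1 \<le> HR_TY p \<and> HR_TY p \<le> upperU Pobs c1)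
       \<and> (\<exists>p\<in>admissible Pobs c1 c2. HR_TY p = lowerL Pobs c1)
       \<and> (\<exists>p\<in>admissible Pobs c1 c2. HR_TY p = upperU Pobs c1)"
proof -
  have part1: "\<forall>p\<in>admissible Pobs c1 c2. lowerL Pobs c1 \<le> HR_TY p \<and> HR_TY p \<le> upperU Pobs c1"
    using bounds by blast
  obtain p0 where p0: "p0 \<in> admissible Pobs c1 c2" using assms(5) by auto
  have pm: "is_pmf p0" and cp: "\<forall>t y s. Pr p0 (\<lambda>w. Y_T t w = y \<and> S_pot t w = s) = Pobs y s t"
    and hts: "HR_TS p0 \<le> c1"
    using p0 by (auto simp: admissible_def compatible_def)
  have nn: "\<forall>a b c d e g. 0 \<le> p0 (a,b,c,d,e,g)" using pm by (simp add: is_pmf_def)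
  have s1: "(\<Sum>w\<in>UNIV. p0 w) = 1" using pm by (simp add: is_pmf_def)
  note nn' = nn[simplified all_bool_eq]
  note cp' = cp[simplified all_bool_eq expand, simplified]
  note s1' = s1[simplified expand, simplified]
  note hts' = hts[unfolded HR_TS_def, simplified expand, simplified]
  have obs: "\<forall>y s t. 0 \<le> Pobs y s t"
    "Pobs True True False + Pobs True False False + Pobs False True False + Pobs False False False = 1"
    "Pobs True True True + Pobs True False True + Pobs False True True + Pobs False False True = 1"
    "Pobs True True False + Pobs False True False - Pobs True True True - Pobs False True True \<le> c1"
    unfolding all_bool_eq
    using nn' cp' s1' hts' by (elim conjE; (intro conjI)?; linarith)+
  define A where "A = (\<lambda>y s. Pobs y s False)"
  define B where "B = (\<lambda>y s. Pobs y s True)"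
  define B' where "B' = (\<lambda>y s. Pobs (\<not> y) s True)"
  have An: "\<forall>y s. 0 \<le> A y s" and Bn: "\<forall>y s. 0 \<le> B y s" and B'n: "\<forall>y s. 0 \<le> B' y s"
    using obs(1) by (simp_all add: A_def B_def B'_def)
  have As: "A True True + A True False + A False True + A False False = 1" using obs(2) by (simp add: A_def)
  have Bs: "B True True + B True False + B False True + B False False = 1" using obs(3) by (simp add: B_def)
  have B's: "B' True True + B' True False + B' False True + B' False False = 1" using obs(3) by (simp add: B'_def)
  have fe: "A True True + A False True - B True True - B False True \<le> c1" using obs(4) by (simp add: A_def B_def)
  have fe': "A True True + A False True - B' True True - B' False True \<le> c1" using obs(4) by (simp add: A_def B'_def)
  obtain Qc where Q1: "\<forall>y0 s0 y1 s1. 0 \<le> Qc y0 s0 y1 s1"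
    and Q2: "\<forall>y s. Qc y s True True + Qc y s True False + Qc y s False True + Qc y s False False = A y s"
    and Q3: "\<forall>y s. Qc True True y s + Qc True False y s + Qc False True y s + Qc False False y s = B y s"
    and Q4: "Qc True True True False + Qc True True False False + Qc False True True False + Qc False True False False \<le> c1"
    and Q5: "min (min (A True True + A True False) (c1 + A True False + B False True))
          (min (B False True + B False False) (1 + c1 - A False True - B True False))
       \<le> Qc True True False True + Qc True True False False + Qc True False False True + Qc True False False False"
    using coupling_exists[OF An Bn As Bs assms(1) fe] by blast
  define pU where "pU = (\<lambda>w. case w of (s0,s1,y00,y01,y10,y11) \<Rightarrow> if y00=y01 \<and> y10=y11 then Qc y00 s0 (id y10) s1 else 0)"
  have Q2': "\<forall>y s. Qc y s True True + Qc y s True False + Qc y s False True + Qc y s False False = Pobs y s False"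
    using Q2 by (simp add: A_def)
  have Q3': "\<forall>y s. Qc True True (id y) s + Qc True False (id y) s + Qc False True (id y) s + Qc False False (id y) s = Pobs y s True"
    using Q3 by (simp add: B_def)
  note LU = lift[OF disjI1[OF refl] Q1 Q2' Q3' obs(2) Q4 assms(3) pU_def]
  have pUa: "pU \<in> admissible Pobs c1 c2" and pUh: "HR_TY pU = Qc True True False True + Qc True True False False + Qc True False False True + Qc True False False False"
    using LU by simp_all
  have Ule: "upperU Pobs c1 \<le> min (min (A True True + A True False) (c1 + A True False + B False True))
          (min (B False True + B False False) (1 + c1 - A False True - B True False))"
    unfolding upperU_def PY_def A_def B_def by (simp add: min_le_iff_disj add.commute)
  have ex2: "\<exists>p\<in>admissible Pobs c1 c2. HR_TY p = upperU Pobs c1"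
  proof (intro bexI[of _ pU])
    show "pU \<in> admissible Pobs c1 c2" by (rule pUa)
    show "HR_TY pU = upperU Pobs c1" using part1 pUa pUh Q5 Ule by force
  qed
  obtain Qd where D1: "\<forall>y0 s0 y1 s1. 0 \<le> Qd y0 s0 y1 s1"
    and D2: "\<forall>y s. Qd y s True True + Qd y s True False + Qd y s False True + Qd y s False False = A y s"
    and D3: "\<forall>y s. Qd True True y s + Qd True False y s + Qd False True y s + Qd False False y s = B' y s"
    and D4: "Qd True True True False + Qd True True False False + Qd False True True False + Qd False True False False \<le> c1"
    and D5: "min (min (A True True + A True False) (c1 + A True False + B' False True))
          (min (B' False True + B' False False) (1 + c1 - A False True - B' True False))
       \<le> Qd True True False True + Qd True True False False + Qd True False False True + Qd True False False False"
    using coupling_exists[OF An B'n As B's assms(1) fe'] by blast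
  define pL where "pL = (\<lambda>w. case w of (s0,s1,y00,y01,y10,y11) \<Rightarrow> if y00=y01 \<and> y10=y11 then Qd y00 s0 (Not y10) s1 else 0)"
  have D2': "\<forall>y s. Qd y s True True + Qd y s True False + Qd y s False True + Qd y s False False = Pobs y s False"
    using D2 by (simp add: A_def)
  have D3': "\<forall>y s. Qd True True (Not y) s + Qd True False (Not y) s + Qd False True (Not y) s + Qd False False (Not y) s = Pobs y s True"
    using D3 by (simp add: B'_def)
  note LL = lift[OF disjI2[OF refl] D1 D2' D3' obs(2) D4 assms(3) pL_def]
  have pLa: "pL \<in> admissible Pobs c1 c2" and pLh: "HR_TY pL = Qd True True True True + Qd True True True False + Qd True False True True + Qd True False True False"
    using LL by simp_all
  have rows: "Qd True True True True + Qd True True True False + Qd True True False True + Qd True True False False = A True True"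
    "Qd True False True True + Qd True False True False + Qd True False False True + Qd True False False False = A True False"
    using D2 by simp_all
  have Lge: "A True True + A True False - min (min (A True True + A True False) (c1 + A True False + B' False True))
          (min (B' False True + B' False False) (1 + c1 - A False True - B' True False)) \<le> lowerL Pobs c1"
  proof -
    have l: "0 \<le> lowerL Pobs c1" "Pobs True True False - Pobs True True True - c1 \<le> lowerL Pobs c1"
      "PY Pobs False True - PY Pobs False False \<le> lowerL Pobs c1"
      "Pobs False False True - Pobs False False False - c1 \<le> lowerL Pobs c1"
      unfolding lowerL_def by simp_all
    show ?thesis
      unfolding min.bounded_iff diff_le_eq
      using l obs(2,3) unfolding A_def B'_def PY_def
      by (simp add: min_le_iff_disj; linarith)
  qed
  have ex1: "\<exists>p\<in>admissible Pobs c1 c2. HR_TY p = lowerL Pobs c1"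
  proof (intro bexI[of _ pL])
    show "pL \<in> admissible Pobs c1 c2" by (rule pLa)
    have "HR_TY pL \<le> lowerL Pobs c1" using pLh rows D5 Lge by linarith
    then show "HR_TY pL = lowerL Pobs c1" using part1 pLa by force
  qed
  show ?thesis using part1 ex1 ex2 by blast
qed

end
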